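(* Let $\varphi\colon[\mathbb{F}_2,\mathbb{F}_2]\to\mathbb{Z}$ be the homomorphism defined below. Then $\varphi(g)=\varphi(hgh^{-1})$ for all $g\in[\mathbb{F}_2,\mathbb{F}_2]$ and all $h\in\mathbb{F}_2$.
   Context: $\mathbb{F}_2$ is the free group on $x,y$. Let $\tilde K$ be the graph with vertex set $\mathbb{Z}^2$ and oriented edges $x^iy^jX$ from $(i,j)$ to $(i+1,j)$ and $x^iy^jY$ from $(i,j)$ to $(i,j+1)$ (the universal abelian cover of the wedge of two circles). A $1$-chain is written $\alpha=P_\alpha(x,y)X+Q_\alpha(x,y)Y$ with $P_\alpha,Q_\alpha$ integer Laurent polynomials (the coefficient of $x^iy^j$ in $P_\alpha$ is the coefficient of the edge $x^iy^jX$, similarly for $Q_\alpha$). For $g\in[\mathbb{F}_2,\mathbb{F}_2]$ written as a word in $x^{\pm1},y^{\pm1}$, the associated cycle $\alpha_g$ is the $1$-cycle traced by the lattice path starting at $(0,0)$ in which a letter $x$ (resp. $x^{-1}$, $y$, $y^{-1}$) moves by $(1,0)$ (resp. $(-1,0)$, $(0,1)$, $(0,-1)$) along the corresponding edge, each edge counted with sign $+1$ if traversed in its orientation and $-1$ otherwise; this is a closed path since $g$ has zero exponent sums, and its homology class depends only on $g$. Let $f_\alpha(y)=P_\alpha(1,y)$. Define $\varphi(g)=f_{\alpha_g}'(1)$; this is a homomorphism $[\mathbb{F}_2,\mathbb{F}_2]\to\mathbb{Z}$ (e.g. $\alpha_{[x,y]}=(1-y)X+(x-1)Y$ and $\varphi([x,y])=-1$,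 where $[g,h]=ghg^{-1}h^{-1}$). *)

theory Defs
  imports "HOL-Analysis.Analysis"
begin

text \<open>Generators of the free group F_2 on x, y; a letter is a generator with a sign
  (True = positive power, False = inverse). Elements of F_2 are represented by words.\<close>

datatype gen = GX | GY

type_synonym letter = "gen \<times> bool"
type_synonym word = "letter list"

definition inv_letter :: "letter \<Rightarrow> letter" where
  "inv_letter l = (fst l, \<not> snd l)"

definition inv_word :: "word \<Rightarrow> word" where
  "inv_word w = rev (map inv_letter w)"

text \<open>Words representing elements of the commutator subgroup [F_2,F_2]:
  the closure of products of commutators [a,b] = a b a^-1 b^-1 under free
  (in)equivalence, i.e. insertion/deletion of cancelling pairs.\<close>

inductive_set comm_words :: "word set" where
  cw_nil: "[] \<in> comm_words"
| cw_comm: "a @ b @ inv_word a @ inv_word b \<in> comm_words"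
| cw_app: "u \<in> comm_words \<Longrightarrow> v \<in> comm_words \<Longrightarrow> u @ v \<in> comm_words"
| cw_ins: "u @ v \<in> comm_words \<Longrightarrow> u @ [l, inv_letter l] @ v \<in> comm_words"
| cw_del: "u @ [l, inv_letter l] @ v \<in> comm_words \<Longrightarrow> u @ v \<in> comm_words"

text \<open>1-chains on the lattice graph: coefficient of the edge x^i y^j X (resp. Y)
  is \<open>\<alpha> (i,j) GX\<close> (resp. \<open>\<alpha> (i,j) GY\<close>).\<close>

type_synonym chain = "int \<times> int \<Rightarrow> gen \<Rightarrow> int"

definition edge :: "int \<times> int \<Rightarrow> gen \<Rightarrow> int \<Rightarrow> chain" where
  "edge p e c = (\<lambda>q e'. if q = p \<and> e' = e then c else 0)"

fun path_chain :: "int \<times> int \<Rightarrow> word \<Rightarrow> chain" where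
  "path_chain p [] = (\<lambda>_ _. 0)"
| "path_chain (i,j) ((GX,True) # w) =
     (\<lambda>q e. edge (i,j) GX 1 q e + path_chain (i+1,j) w q e)"
| "path_chain (i,j) ((GX,False) # w) =
     (\<lambda>q e. edge (i-1,j) GX (-1) q e + path_chain (i-1,j) w q e)"
| "path_chain (i,j) ((GY,True) # w) =
     (\<lambda>q e. edge (i,j) GY 1 q e + path_chain (i,j+1) w q e)"
| "path_chain (i,j) ((GY,False) # w) =
     (\<lambda>q e. edge (i,j-1) GY (-1) q e + path_chain (i,j-1) w q e)"

definition alpha :: "word \<Rightarrow> chain" where
  "alpha w = path_chain (0,0) w"

text \<open>f_\<alpha>(y) = P_\<alpha>(1,y) = \<Sum> over X-edges x^i y^j X of coefficient times y^j.\<close>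
definition f_chain :: "chain \<Rightarrow> real \<Rightarrow> real" where
  "f_chain \<alpha> y = (\<Sum>q\<in>{q. \<alpha> q GX \<noteq> 0}. of_int (\<alpha> q GX) * y powi snd q)"

definition phi :: "word \<Rightarrow> real" where
  "phi w = deriv (f_chain (alpha w)) 1"

end

theory Submission
  imports Defs
begin

fun hs :: "int \<Rightarrow> word \<Rightarrow> int" where
  "hs j [] = 0"
| "hs j ((GX,True)#w) = j + hs j w"
| "hs j ((GX,False)#w) = - j + hs j w"
| "hs j ((GY,True)#w) = hs (j+1) w"
| "hs j ((GY,False)#w) = hs (j-1) w"

fun esum :: "gen \<Rightarrow> word \<Rightarrow> int" where
  "esum e [] = 0"
| "esum e (l#w) = (if fst l = e then (if snd l then 1 else -1) else 0) + esum e w"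

definition supp :: "chain \<Rightarrow> (int \<times> int) set" where
  "supp a = {q. a q GX \<noteq> 0}"

lemma fc_eq:
  assumes "finite S" "supp a \<subseteq> S"
  shows "f_chain a y = (\<Sum>q\<in>S. of_int (a q GX) * y powi snd q)"
  unfolding f_chain_def using assms unfolding supp_def
  by (intro sum.mono_neutral_left) auto

lemma fc_add:
  assumes "finite (supp a)" "finite (supp b)"
  shows "f_chain (\<lambda>q e. a q e + b q e) y = f_chain a y + f_chain b y"
proof -
  let ?S = "supp a \<union> supp b"
  have "supp (\<lambda>q e. a q e + b q e) \<subseteq> ?S" unfolding supp_def by auto
  hence "f_chain (\<lambda>q e. a q e + b q e) y = (\<Sum>q\<in>?S. of_int (a q GX + b q GX) * y powi snd q)"
    using assms by (intro fc_eq) auto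
  also have "\<dots> = (\<Sum>q\<in>?S. of_int (a q GX) * y powi snd q) + (\<Sum>q\<in>?S. of_int (b q GX) * y powi snd q)"
    by (simp add: sum.distrib distrib_right)
  also have "\<dots> = f_chain a y + f_chain b y"
    using assms by (subst (1 2) fc_eq[symmetric]) auto
  finally show ?thesis .
qed

lemma supp_add: "supp (\<lambda>q e. a q e + b q e) \<subseteq> supp a \<union> supp b"
  unfolding supp_def by auto

lemma supp_edge: "supp (edge p e c) \<subseteq> {p}"
  unfolding supp_def edge_def by auto

lemma fc_edgeX: "f_chain (edge p GX c) y = of_int c * y powi snd p"
proof -
  have "f_chain (edge p GX c) y = (\<Sum>q\<in>{p}. of_int (edge p GX c q GX) * y powi snd q)"
    using supp_edge by (intro fc_eq) auto
  thus ?thesis by (simp add: edge_def)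
qed

lemma fc_edgeY: "f_chain (edge p GY c) y = 0"
proof -
  have "f_chain (edge p GY c) y = (\<Sum>q\<in>{p}. of_int (edge p GY c q GX) * y powi snd q)"
    using supp_edge by (intro fc_eq) auto
  thus ?thesis by (simp add: edge_def)
qed

lemma fin_edge: "finite (supp (edge p e c))"
  by (rule finite_subset[OF supp_edge]) simp

lemma fin_add: "finite (supp a) \<Longrightarrow> finite (supp b) \<Longrightarrow> finite (supp (\<lambda>q e. a q e + b q e))"
  by (rule finite_subset[OF supp_add]) simp

lemma powi_deriv: "((\<lambda>y::real. y powi j) has_real_derivative of_int j) (at 1)"
proof -
  have "((\<lambda>y::real. y powi j) has_real_derivative (of_int j * 1 powi (j - 1) * 1)) (at 1)"
    by (rule DERIV_power_int) (auto intro: DERIV_ident)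
  thus ?thesis by simp
qed

lemma pc_step:
  assumes fin: "finite (supp b)"
    and d: "(f_chain b has_real_derivative D) (at 1)"
  shows "finite (supp (\<lambda>q e. edge p GX c q e + b q e)) \<and>
    (f_chain (\<lambda>q e. edge p GX c q e + b q e) has_real_derivative (of_int c * of_int (snd p) + D)) (at 1)"
proof
  show "finite (supp (\<lambda>q e. edge p GX c q e + b q e))" by (rule fin_add[OF fin_edge fin])
  have e: "f_chain (\<lambda>q e. edge p GX c q e + b q e) = (\<lambda>y. of_int c * y powi snd p + f_chain b y)"
  proof
    fix y
    show "f_chain (\<lambda>q e. edge p GX c q e + b q e) y = of_int c * y powi snd p + f_chain b y"
      using fc_add[OF fin_edge fin, of p GX c y] fc_edgeX[of p c y] by simp
  qed
  have "((\<lambda>y. of_int c * y powi snd p + f_chain b y) has_real_derivative (of_int c * of_int (snd p) + D)) (at 1)"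
    by (intro DERIV_add DERIV_cmult powi_deriv d)
  thus "(f_chain (\<lambda>q e. edge p GX c q e + b q e) has_real_derivative (of_int c * of_int (snd p) + D)) (at 1)"
    unfolding e .
qed

lemma pc_stepY:
  assumes fin: "finite (supp b)"
    and d: "(f_chain b has_real_derivative D) (at 1)"
  shows "finite (supp (\<lambda>q e. edge p GY c q e + b q e)) \<and>
    (f_chain (\<lambda>q e. edge p GY c q e + b q e) has_real_derivative D) (at 1)"
proof
  show "finite (supp (\<lambda>q e. edge p GY c q e + b q e))" by (rule fin_add[OF fin_edge fin])
  have e: "f_chain (\<lambda>q e. edge p GY c q e + b q e) = f_chain b"
  proof
    fix y
    show "f_chain (\<lambda>q e. edge p GY c q e + b q e) y = f_chain b y"
      using fc_add[OF fin_edge fin, of p GY c y] fc_edgeY[of p c y] by simp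
  qed
  show "(f_chain (\<lambda>q e. edge p GY c q e + b q e) has_real_derivative D) (at 1)"
    unfolding e by (rule d)
qed

lemma pc_main:
  "finite (supp (path_chain p w)) \<and>
   (f_chain (path_chain p w) has_real_derivative of_int (hs (snd p) w)) (at 1)"
proof (induction p w rule: path_chain.induct)
  case (1 p)
  have "supp (\<lambda>_ _. 0) = {}" by (simp add: supp_def)
  moreover have "f_chain (\<lambda>_ _. 0) = (\<lambda>_. 0)" by (simp add: f_chain_def fun_eq_iff)
  ultimately show ?case by simp
next
  case (2 i j w)
  from pc_step[OF 2[THEN conjunct1] 2[THEN conjunct2], of "(i,j)" 1] show ?case by simp
next
  case (3 i j w)
  from pc_step[OF 3[THEN conjunct1] 3[THEN conjunct2], of "(i-1,j)" "-1"] show ?case by simp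
next
  case (4 i j w)
  from pc_stepY[OF 4[THEN conjunct1] 4[THEN conjunct2], of "(i,j)" 1] show ?case by simp
next
  case (5 i j w)
  from pc_stepY[OF 5[THEN conjunct1] 5[THEN conjunct2], of "(i,j-1)" "-1"] show ?case by simp
qed

lemma phi_hs: "phi w = of_int (hs 0 w)"
  unfolding phi_def alpha_def using pc_main[of "(0,0)" w]
  by (auto intro: DERIV_imp_deriv)

lemma hs_append: "hs j (u @ v) = hs j u + hs (j + esum GY u) v"
  by (induction j u rule: hs.induct) (auto simp: algebra_simps)

lemma esum_append: "esum e (u @ v) = esum e u + esum e v"
  by (induction u) auto

lemma esum_inv: "esum e (inv_word w) = - esum e w"
  by (induction w) (auto simp: inv_word_def inv_letter_def esum_append)

lemma hs_inv: "hs j (inv_word w) = - hs (j - esum GY w) w"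
proof (induction w arbitrary: j)
  case Nil thus ?case by (simp add: inv_word_def)
next
  case (Cons a w)
  obtain g s where a: "a = (g,s)" by force
  have iw: "inv_word (a # w) = inv_word w @ [inv_letter a]" by (simp add: inv_word_def)
  have "hs j (inv_word (a # w)) = hs j (inv_word w) + hs (j - esum GY w) [inv_letter a]"
    unfolding iw hs_append esum_inv by simp
  also have "\<dots> = - hs (j - esum GY w) w + hs (j - esum GY w) [inv_letter a]"
    using Cons by simp
  finally show ?case unfolding a
    by (cases g; cases s) (auto simp: inv_letter_def algebra_simps)
qed

lemma hs_shift': "hs j w = hs k w + (j - k) * esum GX w"
proof (induction w arbitrary: j k)
  case Nil thus ?case by simp
next
  case (Cons a w)
  obtain g s where a: "a = (g,s)" by force
  show ?case
  proof (cases g; cases s)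
    assume "g = GX" "s" thus ?thesis using Cons[of j k] a by (simp add: algebra_simps)
  next
    assume "g = GX" "\<not> s" thus ?thesis using Cons[of j k] a by (simp add: algebra_simps)
  next
    assume "g = GY" "s" thus ?thesis using Cons[of "j+1" "k+1"] a by simp
  next
    assume "g = GY" "\<not> s" thus ?thesis using Cons[of "j-1" "k-1"] a by simp
  qed
qed

lemma hs_shift: "hs j w = hs 0 w + j * esum GX w"
  using hs_shift'[of j w 0] by simp

lemma esum_pair: "esum e (l # inv_letter l # v) = esum e v"
  by (cases l) (auto simp: inv_letter_def)

lemma comm_esum: "g \<in> comm_words \<Longrightarrow> esum e g = 0"
proof (induction rule: comm_words.induct)
  case cw_nil thus ?case by simp
next
  case (cw_comm a b) thus ?case by (simp add: esum_append esum_inv)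
next
  case (cw_app u v) thus ?case by (simp add: esum_append)
next
  case (cw_ins u l v) thus ?case
    by (simp only: esum_append append.simps esum_pair)
next
  case (cw_del u l v) thus ?case
    by (simp only: esum_append append.simps esum_pair)
qed

theorem lemma2p2:
  fixes g h :: word
  assumes "g \<in> comm_words"
  shows "phi (h @ g @ inv_word h) = phi g"
proof -
  have x: "esum GX g = 0" and y: "esum GY g = 0" using comm_esum[OF assms] by auto
  have "hs 0 (h @ g @ inv_word h) = hs 0 g"
    unfolding hs_append hs_inv esum_append y
    using hs_shift[of "esum GY h" g] x by simp
  thus ?thesis by (simp add: phi_hs)
qed

end
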